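(* Let $\mathcal F$ be any family of linear functionals on $\mathbb R^n$ and $\Sigma_{\mathcal F}=\bigcap_{\ell\in\mathcal F}\{\mathbf v\in\mathbb R^n:\ \ell(\mathbf v)\ge0\}$. If a solution of system (CSF) has $\mathbf v_i(0)\in\Sigma_{\mathcal F}$ for all $i$, then $\mathbf v_i(t)\in\Sigma_{\mathcal F}$ for all $i$ and all $t\ge0$.
   Context: Fix integers $N\ge1$, $n\ge1$, masses $m_1,\dots,m_N>0$ with $M=\sum_i m_i$, parameters $\sigma>0$, $p>0$, $\kappa\ge0$, and a communication kernel $\phi:[0,\infty)\to(0,\infty)$ that is smooth, positive and non-increasing. Write $\phi_{ij}=\phi(|\mathbf x_i-\mathbf x_j|)$, with $|\cdot|$ the Euclidean norm on $\mathbb R^n$. System (CSF) is, for $i=1,\dots,N$, $$\dot{\mathbf x}_i=\mathbf v_i,\qquad \dot{\mathbf v}_i=\sum_{j=1}^N m_j\phi_{ij}(\mathbf v_j-\mathbf v_i)+\sigma(\theta_i-|\mathbf v_i|^p)\mathbf v_i,\qquad \dot\theta_i=\kappa\sum_{j=1}^N m_j\phi_{ij}(\theta_j-\theta_i),$$ with $\mathbf x_i,\mathbf v_i\in\mathbb R^n$ and initial values $\theta_i(0)>0$; solutions are considered for $t\ge0$. *)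

theory Defs
  imports "HOL-Analysis.Analysis"
begin

definition smooth_on_nonneg :: "(real \<Rightarrow> real) \<Rightarrow> bool" where
  "smooth_on_nonneg f \<longleftrightarrow> (\<exists>D :: nat \<Rightarrow> real \<Rightarrow> real. D 0 = f \<and>
     (\<forall>k. \<forall>t\<ge>0. (D k has_real_derivative D (Suc k) t) (at t within {0..})))"

definition comm_kernel :: "(real \<Rightarrow> real) \<Rightarrow> bool" where
  "comm_kernel \<phi> \<longleftrightarrow> smooth_on_nonneg \<phi> \<and> (\<forall>r\<ge>0. \<phi> r > 0) \<and>
     (\<forall>r s. 0 \<le> r \<longrightarrow> r \<le> s \<longrightarrow> \<phi> s \<le> \<phi> r)"

text \<open>Solutions of system (CSF) for t \<ge> 0. Agents are indexed by a finite type 'i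
  (so N = CARD('i) \<ge> 1), positions/velocities lie in real^'n.\<close>
definition CSF_solution ::
  "('i::finite \<Rightarrow> real) \<Rightarrow> real \<Rightarrow> real \<Rightarrow> real \<Rightarrow> (real \<Rightarrow> real) \<Rightarrow>
   ('i \<Rightarrow> real \<Rightarrow> real^'n) \<Rightarrow> ('i \<Rightarrow> real \<Rightarrow> real^'n) \<Rightarrow> ('i \<Rightarrow> real \<Rightarrow> real) \<Rightarrow> bool" where
  "CSF_solution m \<sigma> p \<kappa> \<phi> x v \<theta> \<longleftrightarrow>
     (\<forall>i. \<forall>t\<ge>0.
        (x i has_vector_derivative v i t) (at t within {0..}) \<and>
        (v i has_vector_derivative
            ((\<Sum>j\<in>UNIV. (m j * \<phi> (norm (x i t - x j t))) *\<^sub>R (v j t - v i t))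
             + (\<sigma> * (\<theta> i t - norm (v i t) powr p)) *\<^sub>R v i t)) (at t within {0..}) \<and>
        (\<theta> i has_real_derivative
            (\<kappa> * (\<Sum>j\<in>UNIV. m j * \<phi> (norm (x i t - x j t)) * (\<theta> j t - \<theta> i t))))
            (at t within {0..}))"

definition Sigma_F :: "(('a::real_vector) \<Rightarrow> real) set \<Rightarrow> 'a set" where
  "Sigma_F F = (\<Inter>l\<in>F. {w. l w \<ge> 0})"

end

theory Submission
  imports Defs
begin

lemma metzler_pos:
  fixes w :: "'i::finite \<Rightarrow> real \<Rightarrow> real" and a :: "'i \<Rightarrow> 'i \<Rightarrow> real \<Rightarrow> real"
    and b :: "'i \<Rightarrow> real \<Rightarrow> real"
  assumes deriv: "\<And>i t. t \<ge> 0 \<Longrightarrow> (w i has_real_derivative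
        (\<Sum>j\<in>UNIV. a i j t * (w j t - w i t)) + b i t * w i t) (at t within {0..})"
    and apos: "\<And>i j t. t \<ge> 0 \<Longrightarrow> a i j t \<ge> 0"
    and bL: "\<And>i t. 0 \<le> t \<Longrightarrow> t \<le> T \<Longrightarrow> b i t \<le> L"
    and w0: "\<And>i. w i 0 \<ge> 0" and eps: "\<epsilon> > 0"
  shows "\<forall>i. \<forall>t\<in>{0..T}. w i t + \<epsilon> * exp ((L+1)*t) > 0"
proof (rule ccontr)
  define c where "c = L + 1"
  define z where "z i t = w i t + \<epsilon> * exp (c*t)" for i t
  have zd: "(z i has_real_derivative
        (\<Sum>j\<in>UNIV. a i j t * (z j t - z i t)) + b i t * z i t + \<epsilon> * exp (c*t) * (c - b i t))
        (at t within {0..})" if "t \<ge> 0" for i t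
  proof -
    have "((\<lambda>t. w i t + \<epsilon> * exp (c*t)) has_real_derivative
        ((\<Sum>j\<in>UNIV. a i j t * (w j t - w i t)) + b i t * w i t) + \<epsilon> * (exp (c*t) * c))
        (at t within {0..})"
      by (intro derivative_intros deriv that) (auto intro!: derivative_eq_intros)
    moreover have "((\<Sum>j\<in>UNIV. a i j t * (w j t - w i t)) + b i t * w i t) + \<epsilon> * (exp (c*t) * c)
       = (\<Sum>j\<in>UNIV. a i j t * (z j t - z i t)) + b i t * z i t + \<epsilon> * exp (c*t) * (c - b i t)"
      by (simp add: z_def algebra_simps)
    ultimately show ?thesis unfolding z_def[abs_def] by simp
  qed
  have zc: "continuous_on {0..T} (z i)" for i
    by (rule DERIV_continuous_on[where D="\<lambda>t. _ t"],
        rule has_field_derivative_subset[OF zd]) auto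
  assume "\<not> (\<forall>i. \<forall>t\<in>{0..T}. w i t + \<epsilon> * exp ((L+1)*t) > 0)"
  then have ne: "S \<noteq> {}" if "S = {t\<in>{0..T}. \<exists>i. z i t \<le> 0}" for S
    using that by (auto simp: z_def c_def not_less)
  define S where "S = {t\<in>{0..T}. \<exists>i. z i t \<le> 0}"
  have Seq: "S = (\<Union>i. {t\<in>{0..T}. z i t \<le> (\<lambda>_. 0) t})" unfolding S_def by auto
  have "closed S" unfolding Seq
    by (intro closed_UN finite_UNIV ballI continuous_on_closed_Collect_le zc continuous_on_const) auto
  moreover have "bdd_below S" unfolding S_def by (rule bdd_belowI[of _ 0]) auto
  ultimately have tS: "Inf S \<in> S" using ne[OF S_def] closed_contains_Inf by blast
  define s where "s = Inf S"
  have below: "\<And>t. t \<in> S \<Longrightarrow> s \<le> t" unfolding s_def using \<open>bdd_below S\<close> by (simp add: cInf_lower)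
  obtain i where si: "s \<in> {0..T}" "z i s \<le> 0" using tS unfolding s_def S_def by auto
  have z0: "z j 0 > 0" for j using w0[of j] eps by (simp add: z_def)
  have spos: "s > 0" using si z0[of i] by (cases "s = 0") auto
  have zge: "z j s \<ge> 0" for j
  proof (rule ccontr)
    assume "\<not> z j s \<ge> 0"
    hence "- z j 0 \<le> 0" "0 \<le> - z j s" using z0[of j] by auto
    moreover have "continuous_on {0..s} (\<lambda>t. - z j t)"
      using zc[of j] si by (intro continuous_on_minus) (auto elim: continuous_on_subset)
    ultimately obtain x where x: "0 \<le> x" "x \<le> s" "- z j x = 0"
      using IVT'[of "\<lambda>t. - z j t" 0 0 s] spos by auto
    have "x \<noteq> s" using x \<open>\<not> z j s \<ge> 0\<close> by auto
    hence "x \<in> S" "x < s" using x si unfolding S_def by (auto intro!: exI[of _ j])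
    thus False using below by force
  qed
  hence zis: "z i s = 0" using si by (meson antisym)
  have "b i s \<le> L" using bL si by auto
  hence pos: "0 < (\<Sum>j\<in>UNIV. a i j s * (z j s - z i s)) + b i s * z i s + \<epsilon> * exp (c * s) * (c - b i s)"
    using zis zge apos[of s] spos eps unfolding c_def
    by (intro add_nonneg_pos sum_nonneg) (auto intro!: sum_nonneg mult_nonneg_nonneg mult_pos_pos)
  obtain d where d: "d > 0" "\<forall>h>0. s - h \<in> {0..} \<longrightarrow> h < d \<longrightarrow> z i (s - h) < z i s"
    using has_real_derivative_pos_inc_left[OF zd[of s i] pos] spos by auto
  define h where "h = min (d/2) s"
  have h: "h > 0" "h < d" "s - h \<ge> 0" using d spos by (auto simp: h_def)
  have "z i (s - h) < 0" using d(2) h zis by auto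
  hence "s - h \<in> S" using h si unfolding S_def by (auto intro!: exI[of _ i] less_imp_le)
  thus False using below h by force
qed

theorem lemma2p1:
  fixes m :: "'i::finite \<Rightarrow> real" and \<sigma> p \<kappa> :: real and \<phi> :: "real \<Rightarrow> real"
    and x v :: "'i \<Rightarrow> real \<Rightarrow> real^'n" and \<theta> :: "'i \<Rightarrow> real \<Rightarrow> real"
    and F :: "(real^'n \<Rightarrow> real) set"
  assumes "\<forall>i. m i > 0" and "\<sigma> > 0" and "p > 0" and "\<kappa> \<ge> 0"
    and "comm_kernel \<phi>"
    and "\<forall>l\<in>F. linear l"
    and "CSF_solution m \<sigma> p \<kappa> \<phi> x v \<theta>"
    and "\<forall>i. \<theta> i 0 > 0"
    and "\<forall>i. v i 0 \<in> Sigma_F F"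
  shows "\<forall>i. \<forall>t\<ge>0. v i t \<in> Sigma_F F"
proof (intro allI impI)
  fix i t assume t: "(0::real) \<le> t"
  have sol: "\<forall>i. \<forall>t\<ge>0.
        (x i has_vector_derivative v i t) (at t within {0..}) \<and>
        (v i has_vector_derivative
            ((\<Sum>j\<in>UNIV. (m j * \<phi> (norm (x i t - x j t))) *\<^sub>R (v j t - v i t))
             + (\<sigma> * (\<theta> i t - norm (v i t) powr p)) *\<^sub>R v i t)) (at t within {0..}) \<and>
        (\<theta> i has_real_derivative
            (\<kappa> * (\<Sum>j\<in>UNIV. m j * \<phi> (norm (x i t - x j t)) * (\<theta> j t - \<theta> i t))))
            (at t within {0..})"
    using assms(7) unfolding CSF_solution_def by blast
  have phipos: "\<forall>r\<ge>0. \<phi> r > 0" using assms(5) unfolding comm_kernel_def by blast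
  have thc: "continuous_on {0..t} (\<theta> j)" for j
    by (rule DERIV_continuous_on[where D="\<lambda>s. _ s"],
        rule has_field_derivative_subset[of _ _ _ "{0..}"]) (use sol in auto)
  have "\<exists>B. \<forall>s\<in>{0..t}. \<theta> j s \<le> B" for j
    using continuous_attains_sup[OF compact_Icc _ thc[of j]] t by fastforce
  then obtain B where B: "\<And>j s. s \<in> {0..t} \<Longrightarrow> \<theta> j s \<le> B j" by metis
  define L where "L = \<sigma> * (\<Sum>j\<in>UNIV. \<bar>B j\<bar>)"
  have "l (v i t) \<ge> 0" if lF: "l \<in> F" for l
  proof -
    have lin: "linear l" using assms(6) lF by blast
    have bl: "bounded_linear l" using lin linear_conv_bounded_linear by blast
    define w where "w j s = l (v j s)" for j s
    define a where "a j k s = m k * \<phi> (norm (x j s - x k s))" for j k s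
    define b where "b j s = \<sigma> * (\<theta> j s - norm (v j s) powr p)" for j s
    have deriv: "(w j has_real_derivative
        (\<Sum>k\<in>UNIV. a j k s * (w k s - w j s)) + b j s * w j s) (at s within {0..})"
      if "s \<ge> 0" for j s
    proof -
      have "((\<lambda>s. l (v j s)) has_vector_derivative l
            ((\<Sum>k\<in>UNIV. (m k * \<phi> (norm (x j s - x k s))) *\<^sub>R (v k s - v j s))
             + (\<sigma> * (\<theta> j s - norm (v j s) powr p)) *\<^sub>R v j s)) (at s within {0..})"
        using bounded_linear.has_vector_derivative[OF bl] sol that by blast
      moreover have "l ((\<Sum>k\<in>UNIV. (m k * \<phi> (norm (x j s - x k s))) *\<^sub>R (v k s - v j s))
             + (\<sigma> * (\<theta> j s - norm (v j s) powr p)) *\<^sub>R v j s)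
          = (\<Sum>k\<in>UNIV. a j k s * (w k s - w j s)) + b j s * w j s"
        by (simp add: linear_add[OF lin] linear_sum[OF lin] linear_scale[OF lin] linear_diff[OF lin]
            a_def b_def w_def)
      ultimately show ?thesis
        by (simp add: has_real_derivative_iff_has_vector_derivative w_def[abs_def])
    qed
    have apos: "a j k s \<ge> 0" if "s \<ge> 0" for j k s
      unfolding a_def using assms(1) phipos by (simp add: less_imp_le)
    have bL: "b j s \<le> L" if "0 \<le> s" "s \<le> t" for j s
    proof -
      have "b j s \<le> \<sigma> * \<theta> j s" unfolding b_def using assms(2) by simp
      also have "\<dots> \<le> \<sigma> * B j" using B[of s j] that assms(2) by simp
      also have "\<dots> \<le> \<sigma> * (\<Sum>j\<in>UNIV. \<bar>B j\<bar>)"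
        using assms(2) member_le_sum[of j UNIV "\<lambda>j. \<bar>B j\<bar>"] by (intro mult_left_mono) auto
      finally show ?thesis by (simp add: L_def)
    qed
    have w0: "w j 0 \<ge> 0" for j using assms(9) lF unfolding w_def Sigma_F_def by blast
    show ?thesis
    proof (rule ccontr)
      assume neg: "\<not> l (v i t) \<ge> 0"
      define \<epsilon> where "\<epsilon> = - w i t / (2 * exp ((L+1)*t))"
      have ep: "\<epsilon> > 0" using neg unfolding \<epsilon>_def w_def by (simp add: divide_neg_pos)
      have "w i t + \<epsilon> * exp ((L+1)*t) > 0"
        using metzler_pos[of w a b t L \<epsilon>, OF deriv apos bL w0 ep] t by auto
      moreover have "w i t + \<epsilon> * exp ((L+1)*t) = w i t / 2" unfolding \<epsilon>_def by simp
      ultimately show False using neg unfolding w_def by simp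
    qed
  qed
  thus "v i t \<in> Sigma_F F" unfolding Sigma_F_def by blast
qed

end
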